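(* Let $d\colon A\to B$ be a homomorphism of abelian groups. The ring homomorphism $q\colon Q(d)\to\operatorname{End}(d)$ restricts to an isomorphism of partially ordered sets $\operatorname{Id}_0(d)\xrightarrow{\sim}\operatorname{Prj}(d)$ that respects the action of $\operatorname{Aut}(d)$. Its inverse sends $e=(e_A,e_B)\in\operatorname{Prj}(d)$ to the homomorphism $B=\ker(e_B)\oplus\operatorname{im}(e_B)\to A$ that is zero on $\ker(e_B)$ and on $\operatorname{im}(e_B)$ equals the inverse of the isomorphism $\operatorname{im}(e_A)\to\operatorname{im}(e_B)$ obtained by restricting $d$.
   Context: $\operatorname{End}(d)$ is the ring of pairs $(\alpha,\beta)\in\operatorname{End}(A)\times\operatorname{End}(B)$ with $\beta d=d\alpha$ (componentwise operations); $\operatorname{Aut}(d)$ is its unit group. $Q(d)=\mathbb{Z}\oplus\operatorname{Hom}(B,A)$ is the ring with multiplication $(m,f)\star(n,g)=(mn,\,mg+nf+f\circ d\circ g)$ and unit $(1,0)$; $q\colon Q(d)\to\operatorname{End}(d)$ is the ring homomorphism sending $1$ to the identity and $f\in\operatorname{Hom}(B,A)$ to $(f\circ d,\,d\circ f)$. $\operatorname{Id}_0(d)=\{f\in\operatorname{Hom}(B,A): f d f=f\}$, partially ordered by $f\leq g$ iff $f\star g=g\star f=f$. For an idempotent $e=(e_A,e_B)\in\operatorname{End}(d)$, $\operatorname{im}(e)$ denotes the restriction $\operatorname{im}(e_A)\to\operatorname{im}(e_B)$ of $d$; $\operatorname{Prj}(d)$ is the set of idempotents $e\in\operatorname{End}(d)$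 for which $\operatorname{im}(e)$ is an isomorphism, partially ordered by $e\leq e'$ iff $ee'=e'e=e$. $\operatorname{Aut}(d)$ acts on $\operatorname{Prj}(d)$ by conjugation and on $\operatorname{Id}_0(d)$ by $(\alpha,\beta)\cdot f=\alpha\circ f\circ\beta^{-1}$. *)

theory Defs
  imports Complex_Main
begin

definition zsmul :: "int \<Rightarrow> 'a::ab_group_add \<Rightarrow> 'a" where
  "zsmul m x = (if 0 \<le> m then ((+) x ^^ nat m) 0 else - (((+) x ^^ nat (- m)) 0))"

definition End_d :: "('a::ab_group_add \<Rightarrow> 'b::ab_group_add) \<Rightarrow> (('a \<Rightarrow> 'a) \<times> ('b \<Rightarrow> 'b)) set" where
  "End_d d = {(\<alpha>, \<beta>). additive \<alpha> \<and> additive \<beta> \<and> \<beta> \<circ> d = d \<circ> \<alpha>}"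

definition end_mult :: "('a \<Rightarrow> 'a) \<times> ('b \<Rightarrow> 'b) \<Rightarrow> ('a \<Rightarrow> 'a) \<times> ('b \<Rightarrow> 'b) \<Rightarrow> ('a \<Rightarrow> 'a) \<times> ('b \<Rightarrow> 'b)" where
  "end_mult u v = (fst u \<circ> fst v, snd u \<circ> snd v)"

definition is_aut_inv :: "('a::ab_group_add \<Rightarrow> 'b::ab_group_add) \<Rightarrow> ('a \<Rightarrow> 'a) \<times> ('b \<Rightarrow> 'b) \<Rightarrow> ('a \<Rightarrow> 'a) \<times> ('b \<Rightarrow> 'b) \<Rightarrow> bool" where
  "is_aut_inv d u v \<longleftrightarrow> u \<in> End_d d \<and> v \<in> End_d d \<and> end_mult u v = (id, id) \<and> end_mult v u = (id, id)"

definition Q_d :: "('a::ab_group_add \<Rightarrow> 'b::ab_group_add) \<Rightarrow> (int \<times> ('b \<Rightarrow> 'a)) set" where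
  "Q_d d = {(m, f). additive f}"

definition Q_mult :: "('a::ab_group_add \<Rightarrow> 'b::ab_group_add) \<Rightarrow> int \<times> ('b \<Rightarrow> 'a) \<Rightarrow> int \<times> ('b \<Rightarrow> 'a) \<Rightarrow> int \<times> ('b \<Rightarrow> 'a)" where
  "Q_mult d x y = (case x of (m, f) \<Rightarrow> case y of (n, g) \<Rightarrow>
     (m * n, \<lambda>b. zsmul m (g b) + zsmul n (f b) + f (d (g b))))"

definition q_map :: "('a::ab_group_add \<Rightarrow> 'b::ab_group_add) \<Rightarrow> int \<times> ('b \<Rightarrow> 'a) \<Rightarrow> ('a \<Rightarrow> 'a) \<times> ('b \<Rightarrow> 'b)" where
  "q_map d x = (case x of (m, f) \<Rightarrow> (\<lambda>a. zsmul m a + f (d a), \<lambda>b. zsmul m b + d (f b)))"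

definition Id0 :: "('a::ab_group_add \<Rightarrow> 'b::ab_group_add) \<Rightarrow> ('b \<Rightarrow> 'a) set" where
  "Id0 d = {f. additive f \<and> f \<circ> d \<circ> f = f}"

definition le_Id0 :: "('a::ab_group_add \<Rightarrow> 'b::ab_group_add) \<Rightarrow> ('b \<Rightarrow> 'a) \<Rightarrow> ('b \<Rightarrow> 'a) \<Rightarrow> bool" where
  "le_Id0 d f g \<longleftrightarrow> Q_mult d (0, f) (0, g) = (0, f) \<and> Q_mult d (0, g) (0, f) = (0, f)"

definition Prj :: "('a::ab_group_add \<Rightarrow> 'b::ab_group_add) \<Rightarrow> (('a \<Rightarrow> 'a) \<times> ('b \<Rightarrow> 'b)) set" where
  "Prj d = {e. e \<in> End_d d \<and> end_mult e e = e \<and> bij_betw d (range (fst e)) (range (snd e))}"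

definition le_Prj :: "('a \<Rightarrow> 'a) \<times> ('b \<Rightarrow> 'b) \<Rightarrow> ('a \<Rightarrow> 'a) \<times> ('b \<Rightarrow> 'b) \<Rightarrow> bool" where
  "le_Prj e e' \<longleftrightarrow> end_mult e e' = e \<and> end_mult e' e = e"

definition act_Prj :: "('a \<Rightarrow> 'a) \<times> ('b \<Rightarrow> 'b) \<Rightarrow> ('a \<Rightarrow> 'a) \<times> ('b \<Rightarrow> 'b) \<Rightarrow> ('a \<Rightarrow> 'a) \<times> ('b \<Rightarrow> 'b) \<Rightarrow> ('a \<Rightarrow> 'a) \<times> ('b \<Rightarrow> 'b)" where
  "act_Prj u v e = end_mult (end_mult u e) v"

definition act_Id0 :: "('a \<Rightarrow> 'a) \<times> ('b \<Rightarrow> 'b) \<Rightarrow> ('a \<Rightarrow> 'a) \<times> ('b \<Rightarrow> 'b) \<Rightarrow> ('b \<Rightarrow> 'a) \<Rightarrow> ('b \<Rightarrow> 'a)" where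
  "act_Id0 u v f = fst u \<circ> f \<circ> snd v"

text \<open>The claimed inverse: B = ker(e_B) (+) im(e_B) \<rightarrow> A, zero on ker(e_B) and the inverse of
  d restricted to im(e_A) \<rightarrow> im(e_B) on im(e_B); i.e. b \<mapsto> (d|im e_A)^{-1}(e_B b).\<close>
definition prj_inv :: "('a::ab_group_add \<Rightarrow> 'b::ab_group_add) \<Rightarrow> ('a \<Rightarrow> 'a) \<times> ('b \<Rightarrow> 'b) \<Rightarrow> ('b \<Rightarrow> 'a)" where
  "prj_inv d e = (\<lambda>b. the_inv_into (range (fst e)) d (snd e b))"

end

theory Submission
  imports Defs
begin

lemma q0: "q_map d (0, f) = (f \<circ> d, d \<circ> f)"
  by (simp add: q_map_def zsmul_def o_def)

lemma Qm0: "Q_mult d (0, f) (0, g) = (0, f \<circ> d \<circ> g)"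
  by (simp add: Q_mult_def zsmul_def o_def)

lemma fdf: "f \<in> Id0 d \<Longrightarrow> f (d (f b)) = f b"
  unfolding Id0_def by (metis (mono_tags) comp_apply mem_Collect_eq)

lemma Id0_add: "f \<in> Id0 d \<Longrightarrow> additive f"
  unfolding Id0_def by simp

lemma to_Prj:
  assumes d: "additive d" and f: "f \<in> Id0 d"
  shows "q_map d (0, f) \<in> Prj d"
proof -
  have af: "additive f" using f by (rule Id0_add)
  have ad1: "additive (f \<circ> d)" "additive (d \<circ> f)"
    using af d unfolding additive_def by auto
  have inj: "inj_on d (range (f \<circ> d))"
    by (rule inj_onI) (metis f fdf comp_apply rangeE)
  have img: "d ` range (f \<circ> d) = range (d \<circ> f)"
  proof
    show "d ` range (f \<circ> d) \<subseteq> range (d \<circ> f)" by auto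
    show "range (d \<circ> f) \<subseteq> d ` range (f \<circ> d)"
    proof
      fix y assume "y \<in> range (d \<circ> f)"
      then obtain b where "y = d (f b)" by auto
      then have "y = d ((f \<circ> d) (f b))" using fdf[OF f] by simp
      then show "y \<in> d ` range (f \<circ> d)" by blast
    qed
  qed
  show ?thesis unfolding q0 Prj_def End_d_def end_mult_def
    using ad1 inj img fdf[OF f] by (auto simp: bij_betw_def o_def fun_eq_iff)
qed

lemma prj_inv_props:
  assumes d: "additive d" and e: "e \<in> Prj d"
  shows "prj_inv d e \<in> Id0 d \<and> q_map d (0, prj_inv d e) = e"
proof -
  obtain eA eB where eq: "e = (eA, eB)" by (cases e)
  have aA: "additive eA" and aB: "additive eB" and comm: "eB \<circ> d = d \<circ> eA"
    and iA: "eA \<circ> eA = eA" and iB: "eB \<circ> eB = eB"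
    and bij: "bij_betw d (range eA) (range eB)"
    using e unfolding eq Prj_def End_d_def end_mult_def by auto
  have fixA: "x \<in> range eA \<Longrightarrow> eA x = x" for x
  proof -
    assume "x \<in> range eA"
    then obtain y where "x = eA y" by blast
    then show ?thesis using fun_cong[OF iA, of y] by simp
  qed
  have injd: "inj_on d (range eA)" using bij by (simp add: bij_betw_def)
  have imd: "d ` range eA = range eB" using bij by (simp add: bij_betw_def)
  define h where "h = prj_inv d e"
  have hdef: "h b = the_inv_into (range eA) d (eB b)" for b
    unfolding h_def prj_inv_def eq by simp
  have hr: "h b \<in> range eA" for b
  proof -
    have "eB b \<in> d ` range eA" using imd by simp
    then show ?thesis unfolding hdef using injd by (simp add: the_inv_into_into)
  qed
  have dh: "d (h b) = eB b" for b
  proof -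
    have "eB b \<in> d ` range eA" using imd by simp
    then show ?thesis unfolding hdef using injd by (simp add: f_the_inv_into_f)
  qed
  have addh: "additive h"
  proof
    fix x y
    have "eA (h x + h y) = eA (h x) + eA (h y)" by (rule additive.add[OF aA])
    also have "\<dots> = h x + h y" using fixA[OF hr[of x]] fixA[OF hr[of y]] by simp
    finally have r: "h x + h y \<in> range eA" by (rule range_eqI[OF sym])
    have "d (h (x + y)) = eB (x + y)" by (rule dh)
    also have "\<dots> = eB x + eB y" by (rule additive.add[OF aB])
    also have "\<dots> = d (h x) + d (h y)" using dh by simp
    also have "\<dots> = d (h x + h y)" by (rule additive.add[OF d, symmetric])
    finally show "h (x + y) = h x + h y" using inj_onD[OF injd _ hr[of "x+y"] r] by blast
  qed
  have hd: "h (d a) = eA a" for a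
  proof -
    have "d (eA a) = eB (d a)" using fun_cong[OF comm, of a] by simp
    then have "d (h (d a)) = d (eA a)" using dh by simp
    moreover have "eA a \<in> range eA" by simp
    ultimately show ?thesis using inj_onD[OF injd _ hr[of "d a"]] by blast
  qed
  have "h \<circ> d \<circ> h = h"
  proof
    fix b show "(h \<circ> d \<circ> h) b = h b" using hd[of "h b"] fixA[OF hr[of b]] by simp
  qed
  then have "h \<in> Id0 d" unfolding Id0_def using addh by simp
  moreover have "q_map d (0, h) = e" unfolding q0 eq using hd dh by (simp add: fun_eq_iff)
  ultimately show ?thesis unfolding h_def by simp
qed

lemma inv_q:
  assumes f: "f \<in> Id0 d"
  shows "prj_inv d (q_map d (0, f)) = f"
proof
  fix b
  have inj: "inj_on d (range (f \<circ> d))"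
    by (rule inj_onI) (metis f fdf comp_apply rangeE)
  have "f b \<in> range (f \<circ> d)" using fdf[OF f, of b] by (metis comp_apply rangeI)
  then show "prj_inv d (q_map d (0, f)) b = f b"
    unfolding prj_inv_def q0 using inj by (simp add: the_inv_into_f_f)
qed

theorem proposition4p6:
  fixes d :: "'a::ab_group_add \<Rightarrow> 'b::ab_group_add"
  assumes "additive d"
  shows "bij_betw (\<lambda>f. q_map d (0, f)) (Id0 d) (Prj d)
    \<and> (\<forall>f\<in>Id0 d. \<forall>g\<in>Id0 d. le_Id0 d f g \<longleftrightarrow> le_Prj (q_map d (0, f)) (q_map d (0, g)))
    \<and> (\<forall>u v. is_aut_inv d u v \<longrightarrow>
         (\<forall>f\<in>Id0 d. q_map d (0, act_Id0 u v f) = act_Prj u v (q_map d (0, f))))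
    \<and> (\<forall>e\<in>Prj d. prj_inv d e \<in> Id0 d \<and> q_map d (0, prj_inv d e) = e)
    \<and> (\<forall>f\<in>Id0 d. prj_inv d (q_map d (0, f)) = f)"
proof (intro conjI ballI allI impI)
  show "bij_betw (\<lambda>f. q_map d (0, f)) (Id0 d) (Prj d)"
  proof (rule bij_betw_byWitness[where f' = "prj_inv d"])
    show "\<forall>a\<in>Id0 d. prj_inv d (q_map d (0, a)) = a" using inv_q by blast
    show "\<forall>a'\<in>Prj d. q_map d (0, prj_inv d a') = a'" using prj_inv_props assms by blast
    show "(\<lambda>f. q_map d (0, f)) ` Id0 d \<subseteq> Prj d" using to_Prj assms by blast
    show "prj_inv d ` Prj d \<subseteq> Id0 d" using prj_inv_props assms by blast
  qed
next
  fix f g assume f: "f \<in> Id0 d" and g: "g \<in> Id0 d"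
  show "le_Id0 d f g \<longleftrightarrow> le_Prj (q_map d (0, f)) (q_map d (0, g))"
  proof
    assume "le_Id0 d f g"
    then have 1: "f (d (g b)) = f b" and 2: "g (d (f b)) = f b" for b
      unfolding le_Id0_def Qm0 by (auto simp: fun_eq_iff)
    show "le_Prj (q_map d (0, f)) (q_map d (0, g))"
      unfolding le_Prj_def q0 end_mult_def using 1 2 by (auto simp: fun_eq_iff)
  next
    assume "le_Prj (q_map d (0, f)) (q_map d (0, g))"
    then have 1: "d (f (d (g b))) = d (f b)" and 2: "g (d (f (d a))) = f (d a)" for a b
      unfolding le_Prj_def q0 end_mult_def by (auto simp: fun_eq_iff)
    have "f (d (g b)) = f b" for b
      by (metis 1 f fdf)
    moreover have "g (d (f b)) = f b" for b
      by (metis 2 f fdf)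
    ultimately show "le_Id0 d f g"
      unfolding le_Id0_def Qm0 by (auto simp: fun_eq_iff)
  qed
next
  fix u v f assume uv: "is_aut_inv d u v" and f: "f \<in> Id0 d"
  obtain a b where u: "u = (a, b)" by (cases u)
  obtain a' b' where v: "v = (a', b')" by (cases v)
  have c1: "b \<circ> d = d \<circ> a" and c2: "b' \<circ> d = d \<circ> a'"
    using uv unfolding is_aut_inv_def End_d_def u v by auto
  show "q_map d (0, act_Id0 u v f) = act_Prj u v (q_map d (0, f))"
    unfolding q0 act_Id0_def act_Prj_def end_mult_def u v using c1 c2
    by (simp add: fun_eq_iff)
next
  fix e assume "e \<in> Prj d"
  then show "prj_inv d e \<in> Id0 d" "q_map d (0, prj_inv d e) = e"
    using prj_inv_props assms by blast+
next
  fix f assume "f \<in> Id0 d" then show "prj_inv d (q_map d (0, f)) = f" by (rule inv_q)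
qed

end
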